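(* There exists a hypothesis class $\mathcal H$ with VC dimension $1$ such that every protocol that learns $\mathcal H$ properly with error parameter $\epsilon$ has sample complexity at least $\tilde\Omega(1/\epsilon)$. Moreover, this holds even if the input sample is realizable by $\mathcal H$.
   Context: Communication model: Let $\mathcal X$ be a domain and $\mathcal Z=\mathcal X\times\{\pm1\}$ the set of examples. A sample is a finite sequence of examples. Alice receives a sample $S_a$ and Bob a sample $S_b$; the joint sample $S=(S_a,S_b)$ is their concatenation, arbitrarily split. A deterministic protocol proceeds by messages, each either a single example from the sender's own input sample or a single bit, depending only on the sender's input and previous messages; output is determined by the messages. Each example or bit costs one unit; sample complexity is the maximal number of units transmitted. $L_S(h)=\frac{1}{|S|}\sum_{(x,y)\in S}1[h(x)\ne y]$; $S$ is realizable by $\mathcal H$ if $L_S(h)=0$ for some $h\in\mathcal H$. A protocol learns $\mathcal H$ with error $\epsilon$ if it always outputs $h$ with $L_S(h)\le\min_{f\in\mathcal H}L_S(f)+\epsilon$; it learns properly if its output always lies in $\mathcal H$. $\tilde\Omega$ denotes a lower bound up to logarithmic factors. *)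

theory Defs
  imports Complex_Main
begin

text \<open>Labels in {+1,-1} are represented by bool (True = +1).
  An example is a pair (x, y); a sample is a list of examples;
  a hypothesis is a function 'x => bool.\<close>

type_synonym 'x example = "'x \<times> bool"
type_synonym 'x sample = "'x example list"
type_synonym 'x hyp = "'x \<Rightarrow> bool"

definition loss :: "'x sample \<Rightarrow> 'x hyp \<Rightarrow> real" where
  "loss S h = real (length (filter (\<lambda>(x, y). h x \<noteq> y) S)) / real (length S)"

definition realizable :: "'x hyp set \<Rightarrow> 'x sample \<Rightarrow> bool" where
  "realizable H S \<longleftrightarrow> (\<exists>h\<in>H. loss S h = 0)"

definition shatters :: "'x hyp set \<Rightarrow> 'x set \<Rightarrow> bool" where
  "shatters H A \<longleftrightarrow> (\<forall>B\<subseteq>A. \<exists>h\<in>H. \<forall>x\<in>A. h x = (x \<in> B))"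

definition vc_dim_eq :: "'x hyp set \<Rightarrow> nat \<Rightarrow> bool" where
  "vc_dim_eq H d \<longleftrightarrow> (\<exists>A. finite A \<and> card A = d \<and> shatters H A)
                     \<and> (\<forall>A. finite A \<and> shatters H A \<longrightarrow> card A \<le> d)"

text \<open>A message is either a single example or a single bit; each costs one unit.\<close>
datatype 'x msg = MEx "'x \<times> bool" | MBit bool

text \<open>A deterministic protocol: the transcript determines who speaks next
  (Some True = Alice, Some False = Bob, None = the protocol has ended);
  the speaker's message depends only on the speaker's own input sample and
  the previous messages; the output depends only on the messages.\<close>
record 'x protocol =
  turn  :: "'x msg list \<Rightarrow> bool option"
  alice :: "'x sample \<Rightarrow> 'x msg list \<Rightarrow> 'x msg"
  bob   :: "'x sample \<Rightarrow> 'x msg list \<Rightarrow> 'x msg"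
  outp :: "'x msg list \<Rightarrow> 'x hyp"

definition msg_from :: "'x sample \<Rightarrow> 'x msg \<Rightarrow> bool" where
  "msg_from S m \<longleftrightarrow> (case m of MEx e \<Rightarrow> e \<in> set S | MBit b \<Rightarrow> True)"

inductive reaches :: "'x protocol \<Rightarrow> 'x sample \<Rightarrow> 'x sample \<Rightarrow> 'x msg list \<Rightarrow> bool"
  for P Sa Sb where
  start: "reaches P Sa Sb []"
| step_alice: "reaches P Sa Sb tr \<Longrightarrow> turn P tr = Some True
               \<Longrightarrow> reaches P Sa Sb (tr @ [alice P Sa tr])"
| step_bob: "reaches P Sa Sb tr \<Longrightarrow> turn P tr = Some False
               \<Longrightarrow> reaches P Sa Sb (tr @ [bob P Sb tr])"

definition legal_run :: "'x protocol \<Rightarrow> 'x sample \<Rightarrow> 'x sample \<Rightarrow> bool" where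
  "legal_run P Sa Sb \<longleftrightarrow>
     (\<forall>tr. reaches P Sa Sb tr \<longrightarrow>
        (turn P tr = Some True \<longrightarrow> msg_from Sa (alice P Sa tr)) \<and>
        (turn P tr = Some False \<longrightarrow> msg_from Sb (bob P Sb tr)))"

definition halts_with :: "'x protocol \<Rightarrow> 'x sample \<Rightarrow> 'x sample \<Rightarrow> 'x msg list \<Rightarrow> bool" where
  "halts_with P Sa Sb tr \<longleftrightarrow> reaches P Sa Sb tr \<and> turn P tr = None"

definition learns_properly_on ::
  "('x sample \<Rightarrow> bool) \<Rightarrow> 'x hyp set \<Rightarrow> real \<Rightarrow> 'x protocol \<Rightarrow> bool" where
  "learns_properly_on Adm H eps P \<longleftrightarrow>
     (\<forall>Sa Sb. Adm (Sa @ Sb) \<longrightarrow>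
        legal_run P Sa Sb \<and>
        (\<exists>tr. halts_with P Sa Sb tr \<and> outp P tr \<in> H \<and>
              loss (Sa @ Sb) (outp P tr) \<le> (INF f\<in>H. loss (Sa @ Sb) f) + eps))"

end

theory Submission
  imports Defs "HOL-Library.Nat_Bijection"
begin

section \<open>Generic protocol facts\<close>

lemma reaches_snoc:
  assumes "reaches P a b (t @ [m])"
  shows "reaches P a b t \<and> ((turn P t = Some True \<and> m = alice P a t) \<or>
          (turn P t = Some False \<and> m = bob P b t))"
  using assms by (cases rule: reaches.cases) auto

lemma reaches_prefix:
  "reaches P a b (t @ s) \<Longrightarrow> reaches P a b t"
proof (induction s rule: rev_induct)
  case Nil then show ?case by simp
next
  case (snoc x xs)
  then show ?case using reaches_snoc[of P a b "t @ xs" x] by simp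
qed

lemma reaches_rect:
  "reaches P a1 b1 t \<Longrightarrow> reaches P a2 b2 t \<Longrightarrow> reaches P a1 b2 t"
proof (induction t rule: rev_induct)
  case Nil then show ?case by (simp add: reaches.start)
next
  case (snoc m t)
  from reaches_snoc[OF snoc.prems(1)] reaches_snoc[OF snoc.prems(2)] snoc.IH
  show ?case by (auto intro: reaches.step_alice reaches.step_bob)
qed

lemma reaches_take:
  assumes "reaches P a b t2" "k \<le> length t2"
  shows "reaches P a b (take k t2)"
  using reaches_prefix[of P a b "take k t2" "drop k t2"] assms by simp

lemma reaches_chain:
  "reaches P a b t1 \<Longrightarrow> reaches P a b t2 \<Longrightarrow> length t1 \<le> length t2 \<Longrightarrow> t1 = take (length t1) t2"
proof (induction t1 rule: rev_induct)
  case Nil then show ?case by simp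
next
  case (snoc m t)
  have rt: "reaches P a b t" using reaches_snoc[OF snoc.prems(1)] by simp
  have IH: "t = take (length t) t2" using snoc rt by simp
  have lt: "length t < length t2" using snoc.prems(3) by simp
  have tk: "take (Suc (length t)) t2 = t @ [t2 ! length t]"
    using lt IH by (metis take_Suc_conv_app_nth)
  have "reaches P a b (t @ [t2 ! length t])"
    using reaches_take[OF snoc.prems(2), of "Suc (length t)"] lt tk by simp
  from reaches_snoc[OF this] reaches_snoc[OF snoc.prems(1)]
  have "m = t2 ! length t" by auto
  then show ?case using tk by simp
qed

lemma reaches_halt:
  assumes "reaches P a b t" "turn P t = None" "reaches P a b t2" "length t \<le> length t2"
  shows "t2 = t"
proof -
  have tt: "t = take (length t) t2" using reaches_chain assms by blast
  show ?thesis
  proof (cases "length t < length t2")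
    case True
    have tk: "take (Suc (length t)) t2 = t @ [t2 ! length t]"
      using True tt by (metis take_Suc_conv_app_nth)
    have "reaches P a b (t @ [t2 ! length t])"
      using reaches_take[OF assms(3), of "Suc (length t)"] True tk by simp
    from reaches_snoc[OF this] assms(2) show ?thesis by auto
  next
    case False
    then show ?thesis using tt assms(4) by simp
  qed
qed

lemma halts_unique:
  assumes "halts_with P a b tr" "reaches P a b t" "turn P t = None"
  shows "tr = t"
proof (cases "length t \<le> length tr")
  case True
  then show ?thesis using reaches_halt[OF assms(2) assms(3)] assms(1)
    unfolding halts_with_def by blast
next
  case False
  then show ?thesis using reaches_halt[of P a b tr t] assms(1,2)
    unfolding halts_with_def by auto
qed

definition stp :: "'x protocol \<Rightarrow> 'x sample \<Rightarrow> 'x sample \<Rightarrow> 'x msg list \<Rightarrow> 'x msg list" where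
  "stp P a b t = (case turn P t of None \<Rightarrow> t
     | Some c \<Rightarrow> (if c then (if msg_from a (alice P a t) then t @ [alice P a t] else t)
                  else (if msg_from b (bob P b t) then t @ [bob P b t] else t)))"

definition run :: "'x protocol \<Rightarrow> 'x sample \<Rightarrow> 'x sample \<Rightarrow> nat \<Rightarrow> 'x msg list" where
  "run P a b k = (stp P a b ^^ k) []"

lemma run_Suc: "run P a b (Suc k) = stp P a b (run P a b k)"
  unfolding run_def by simp

lemma reaches_stp: "reaches P a b t \<Longrightarrow> reaches P a b (stp P a b t)"
  unfolding stp_def
  by (auto split: option.splits intro: reaches.step_alice reaches.step_bob)

lemma reaches_run: "reaches P a b (run P a b k)"
  by (induction k) (auto simp: run_Suc run_def reaches.start intro: reaches_stp)

lemma stp_cases: "stp P a b t = t \<or> length (stp P a b t) = Suc (length t)"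
  unfolding stp_def by (auto split: option.splits)

lemma run_len: "length (run P a b k) \<le> k"
proof (induction k)
  case 0 then show ?case by (simp add: run_def)
next
  case (Suc k)
  then show ?case using stp_cases[of P a b "run P a b k"] by (auto simp: run_Suc)
qed

lemma run_fix: "length (run P a b k) = k \<or> stp P a b (run P a b k) = run P a b k"
proof (induction k)
  case 0 then show ?case by (simp add: run_def)
next
  case (Suc k)
  then show ?case
  proof
    assume "length (run P a b k) = k"
    then show ?thesis using stp_cases[of P a b "run P a b k"] by (auto simp: run_Suc)
  next
    assume "stp P a b (run P a b k) = run P a b k"
    then show ?thesis by (simp add: run_Suc)
  qed
qed

lemma stp_fix:
  assumes "stp P a b t = t"
  shows "turn P t = None \<or> (turn P t = Some True \<and> \<not> msg_from a (alice P a t))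
         \<or> (turn P t = Some False \<and> \<not> msg_from b (bob P b t))"
  using assms unfolding stp_def by (auto split: option.splits if_splits)

lemma msg_from_alpha: "msg_from a m \<Longrightarrow> m \<in> range MBit \<union> MEx ` set a"
  unfolding msg_from_def by (cases m) auto

lemma run_alpha: "set (run P a b k) \<subseteq> range MBit \<union> MEx ` (set a \<union> set b)"
proof (induction k)
  case 0 then show ?case by (simp add: run_def)
next
  case (Suc k)
  then show ?case unfolding run_Suc stp_def
    by (auto split: option.splits dest!: msg_from_alpha)
qed

lemma sum_pow_le: "(\<Sum>k\<le>L. (s::nat) ^ k) \<le> (s + 1) ^ L"
proof (induction L)
  case 0 then show ?case by simp
next
  case (Suc L)
  have "(\<Sum>k\<le>Suc L. s ^ k) = (\<Sum>k\<le>L. s ^ k) + s ^ Suc L" by simp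
  also have "\<dots> \<le> (s+1)^L + s * (s+1)^L"
    using Suc power_mono[of s "s+1" L] by (simp add: add_mono)
  also have "\<dots> = (s+1)^Suc L" by simp
  finally show ?case .
qed

lemma lists_le_card:
  assumes "finite A"
  shows "finite {xs. set xs \<subseteq> A \<and> length xs \<le> L} \<and>
         card {xs. set xs \<subseteq> A \<and> length xs \<le> L} \<le> (card A + 1) ^ L"
proof -
  have eq: "{xs. set xs \<subseteq> A \<and> length xs \<le> L} = (\<Union>k\<le>L. {xs. set xs \<subseteq> A \<and> length xs = k})"
    by auto
  have fin: "\<And>k. finite {xs. set xs \<subseteq> A \<and> length xs = k}"
    using finite_lists_length_eq[OF assms] by blast
  have "card (\<Union>k\<le>L. {xs. set xs \<subseteq> A \<and> length xs = k}) \<le> (\<Sum>k\<le>L. card {xs. set xs \<subseteq> A \<and> length xs = k})"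
    by (rule card_UN_le) simp
  also have "\<dots> = (\<Sum>k\<le>L. card A ^ k)" by (simp add: card_lists_length_eq[OF assms])
  also have "\<dots> \<le> (card A + 1) ^ L" by (rule sum_pow_le)
  finally show ?thesis using eq fin by auto
qed


section \<open>The hard class\<close>

definition bpt :: "nat \<Rightarrow> nat" where "bpt n = prod_encode (n, 0)"
definition ept :: "nat \<Rightarrow> nat \<Rightarrow> nat" where "ept n j = prod_encode (n, Suc j)"
definition hc :: "nat \<Rightarrow> nat \<Rightarrow> nat hyp" where "hc n j = (\<lambda>x. x = bpt n \<or> x = ept n j)"
definition HH :: "nat hyp set" where "HH = {hc n j | n j. j < n}"

lemma bpt_inj[simp]: "bpt n = bpt m \<longleftrightarrow> n = m"
  unfolding bpt_def by (auto dest: inj_onD[OF inj_prod_encode, of "(n,0)" "(m,0)"])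
lemma ept_inj[simp]: "ept n j = ept m i \<longleftrightarrow> n = m \<and> j = i"
  unfolding ept_def by (auto dest: inj_onD[OF inj_prod_encode, of "(n,Suc j)" "(m,Suc i)"])
lemma bpt_ept[simp]: "bpt n \<noteq> ept m j" "ept m j \<noteq> bpt n"
  unfolding bpt_def ept_def by (auto dest: inj_onD[OF inj_prod_encode, of "(n,0)" "(m,Suc j)"])

definition cons :: "nat sample \<Rightarrow> nat hyp \<Rightarrow> bool" where
  "cons S h \<longleftrightarrow> (\<forall>(x,y)\<in>set S. h x = y)"

lemma cons_loss: "cons S h \<Longrightarrow> loss S h = 0"
  unfolding cons_def loss_def
  by (auto simp: filter_empty_conv)

lemma loss_cons:
  assumes "loss S h \<le> eps" "eps * real (length S) < 1"
  shows "cons S h"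
proof (rule ccontr)
  assume "\<not> cons S h"
  then obtain x y where xy: "(x,y) \<in> set S" "h x \<noteq> y" unfolding cons_def by auto
  then have c: "length (filter (\<lambda>(x, y). h x \<noteq> y) S) \<ge> 1"
  proof -
    have "filter (\<lambda>(x, y). h x \<noteq> y) S \<noteq> []" using xy by (auto simp: filter_empty_conv)
    then show ?thesis by (cases "filter (\<lambda>(x, y). h x \<noteq> y) S") auto
  qed
  have lp: "length S > 0" using xy by (cases S) auto
  have "1 / real (length S) \<le> loss S h"
    unfolding loss_def using c lp by (simp add: divide_right_mono)
  then have "1 / real (length S) \<le> eps" using assms(1) by simp
  then have "1 \<le> eps * real (length S)" using lp by (simp add: field_simps)
  then show False using assms(2) by simp
qed

definition AS :: "nat \<Rightarrow> nat set \<Rightarrow> nat sample" where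
  "AS n X = (bpt n, True) # map (\<lambda>j. (ept n j, False)) (filter (\<lambda>j. j \<in> X) [0..<n])"
definition BS :: "nat \<Rightarrow> nat set \<Rightarrow> nat sample" where
  "BS n X = map (\<lambda>j. (ept n j, False)) (filter (\<lambda>j. j \<notin> X) [0..<n])"

lemma len_AB: "length (AS n X1 @ BS n X2) \<le> 2*n+1"
proof -
  have "length (filter (\<lambda>j. j \<in> X1) [0..<n]) \<le> n" using length_filter_le[of _ "[0..<n]"] by simp
  moreover have "length (filter (\<lambda>j. j \<notin> X2) [0..<n]) \<le> n" using length_filter_le[of _ "[0..<n]"] by simp
  ultimately show ?thesis unfolding AS_def BS_def by simp
qed

lemma cross_cons:
  assumes "j < n" "j \<notin> X1" "j \<in> X2"
  shows "cons (AS n X1 @ BS n X2) (hc n j)"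
  using assms unfolding cons_def AS_def BS_def hc_def by auto

lemma cross_real:
  assumes "j < n" "j \<notin> X1" "j \<in> X2"
  shows "realizable HH (AS n X1 @ BS n X2)"
  unfolding realizable_def HH_def using cons_loss[OF cross_cons[OF assms]] assms(1) by blast

lemma out_analysis:
  assumes "h \<in> HH" "cons (AS n X1 @ BS n X2) h"
  shows "cons (AS n X1) h \<and> \<not> cons (AS n X2) h"
proof -
  obtain n' j' where h: "h = hc n' j'" "j' < n'" using assms(1) unfolding HH_def by auto
  have "h (bpt n)" using assms(2) unfolding cons_def AS_def by auto
  then have nn: "n' = n" using h unfolding hc_def by auto
  have "j' \<in> X2"
  proof (rule ccontr)
    assume "j' \<notin> X2"
    then have "(ept n j', False) \<in> set (BS n X2)" using h nn unfolding BS_def by auto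
    then show False using assms(2) h nn unfolding cons_def hc_def by auto
  qed
  then have "(ept n j', False) \<in> set (AS n X2)" using h nn unfolding AS_def by auto
  then have "\<not> cons (AS n X2) h" using h nn unfolding cons_def hc_def by auto
  moreover have "cons (AS n X1) h" using assms(2) unfolding cons_def by auto
  ultimately show ?thesis by simp
qed


lemma loss_nonneg: "0 \<le> loss S h"
  unfolding loss_def by simp

lemma key:
  fixes P :: "nat protocol"
  assumes learn: "learns_properly_on (realizable HH) HH eps P"
    and eps: "0 < eps" "eps * real (2*n+1) < 1"
    and short: "\<And>Y1 Y2 tr. realizable HH (AS n Y1 @ BS n Y2) \<Longrightarrow>
                   halts_with P (AS n Y1) (BS n Y2) tr \<Longrightarrow> length tr < L"
    and j: "j < n" "j \<notin> X1" "j \<in> X2"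
    and eqt: "run P (AS n X1) (BS n X1) L = run P (AS n X2) (BS n X2) L"
  shows "cons (AS n X1) (outp P (run P (AS n X1) (BS n X1) L)) \<noteq>
         cons (AS n X2) (outp P (run P (AS n X2) (BS n X2) L))"
proof -
  define t where "t = run P (AS n X1) (BS n X1) L"
  have R1: "reaches P (AS n X1) (BS n X1) t" unfolding t_def by (rule reaches_run)
  have R2: "reaches P (AS n X2) (BS n X2) t" unfolding t_def eqt by (rule reaches_run)
  have RC: "reaches P (AS n X1) (BS n X2) t" by (rule reaches_rect[OF R1 R2])
  have rc: "realizable HH (AS n X1 @ BS n X2)" using cross_real[OF j] .
  from learn rc obtain tr where legal: "legal_run P (AS n X1) (BS n X2)"
    and hw: "halts_with P (AS n X1) (BS n X2) tr" and hin: "outp P tr \<in> HH"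
    and hl: "loss (AS n X1 @ BS n X2) (outp P tr) \<le> (INF f\<in>HH. loss (AS n X1 @ BS n X2) f) + eps"
    unfolding learns_properly_on_def by blast
  have trL: "length tr < L" using short[OF rc hw] .
  have "length t \<noteq> L"
  proof
    assume tl: "length t = L"
    have "reaches P (AS n X1) (BS n X2) tr" "turn P tr = None" using hw unfolding halts_with_def by auto
    then have "t = tr" using reaches_halt[of P "AS n X1" "BS n X2" tr t] RC trL tl by simp
    then show False using trL tl by simp
  qed
  then have f1: "stp P (AS n X1) (BS n X1) t = t"
    using run_fix[of P "AS n X1" "BS n X1" L] unfolding t_def by auto
  have f2: "stp P (AS n X2) (BS n X2) t = t"
    using run_fix[of P "AS n X2" "BS n X2" L] \<open>length t \<noteq> L\<close> unfolding t_def eqt by auto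
  have la: "turn P t = Some True \<Longrightarrow> msg_from (AS n X1) (alice P (AS n X1) t)"
    using legal RC unfolding legal_run_def by blast
  have lb: "turn P t = Some False \<Longrightarrow> msg_from (BS n X2) (bob P (BS n X2) t)"
    using legal RC unfolding legal_run_def by blast
  have tn: "turn P t = None"
    using stp_fix[OF f1] stp_fix[OF f2] la lb by auto
  have trt: "tr = t" using halts_unique[OF hw RC tn] .
  have "(INF f\<in>HH. loss (AS n X1 @ BS n X2) f) \<le> loss (AS n X1 @ BS n X2) (hc n j)"
  proof (rule cINF_lower)
    show "bdd_below ((\<lambda>f. loss (AS n X1 @ BS n X2) f) ` HH)"
      unfolding bdd_below_def using loss_nonneg by blast
    show "hc n j \<in> HH" unfolding HH_def using j by blast
  qed
  also have "\<dots> = 0" using cons_loss[OF cross_cons[OF j]] .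
  finally have "loss (AS n X1 @ BS n X2) (outp P tr) \<le> eps" using hl by simp
  moreover have "eps * real (length (AS n X1 @ BS n X2)) < 1"
  proof -
    have "real (length (AS n X1 @ BS n X2)) \<le> real (2*n+1)" using len_AB[of n X1 X2] by linarith
    then have "eps * real (length (AS n X1 @ BS n X2)) \<le> eps * real (2*n+1)"
      using eps(1) by (simp add: mult_left_mono)
    then show ?thesis using eps(2) by simp
  qed
  ultimately have "cons (AS n X1 @ BS n X2) (outp P tr)" by (rule loss_cons)
  from out_analysis[OF hin this] show ?thesis using trt eqt unfolding t_def by simp
qed


lemma core:
  fixes P :: "nat protocol"
  assumes learn: "learns_properly_on (realizable HH) HH eps P"
    and eps: "0 < eps" "eps * real (2*n+1) < 1"
    and small: "2 * (n+4)^L < (2::nat)^n"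
  shows "\<exists>Sa Sb tr. realizable HH (Sa @ Sb) \<and> halts_with P Sa Sb tr \<and> L \<le> length tr"
proof (rule ccontr)
  assume "\<not> ?thesis"
  then have short: "\<And>X1 X2 tr. realizable HH (AS n X1 @ BS n X2) \<Longrightarrow>
                   halts_with P (AS n X1) (BS n X2) tr \<Longrightarrow> length tr < L"
    by (meson not_le)
  define f where "f X = (run P (AS n X) (BS n X) L,
                         cons (AS n X) (outp P (run P (AS n X) (BS n X) L)))" for X
  have inj: "inj_on f (Pow {..<n})"
  proof (rule inj_onI)
    fix X1 X2 assume X1: "X1 \<in> Pow {..<n}" and X2: "X2 \<in> Pow {..<n}" and fe: "f X1 = f X2"
    show "X1 = X2"
    proof (rule ccontr)
      assume "X1 \<noteq> X2"
      then obtain j where "(j \<in> X2 \<and> j \<notin> X1) \<or> (j \<in> X1 \<and> j \<notin> X2)" by blast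
      then show False
      proof
        assume jj: "j \<in> X2 \<and> j \<notin> X1"
        then have "j < n" using X2 by auto
        have eq: "run P (AS n X1) (BS n X1) L = run P (AS n X2) (BS n X2) L" using fe f_def by simp
        have "cons (AS n X1) (outp P (run P (AS n X1) (BS n X1) L)) \<noteq>
              cons (AS n X2) (outp P (run P (AS n X2) (BS n X2) L))"
          by (rule key[OF learn eps(1) eps(2) short]) (use \<open>j < n\<close> jj eq in auto)
        then show False using fe f_def by simp
      next
        assume jj: "j \<in> X1 \<and> j \<notin> X2"
        then have "j < n" using X1 by auto
        have eq: "run P (AS n X2) (BS n X2) L = run P (AS n X1) (BS n X1) L" using fe f_def by simp
        have "cons (AS n X2) (outp P (run P (AS n X2) (BS n X2) L)) \<noteq>
              cons (AS n X1) (outp P (run P (AS n X1) (BS n X1) L))"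
          by (rule key[OF learn eps(1) eps(2) short]) (use \<open>j < n\<close> jj eq in auto)
        then show False using fe f_def by simp
      qed
    qed
  qed
  define U where "U = insert (bpt n, True) ((\<lambda>j. (ept n j, False)) ` {..<n})"
  define Sig where "Sig = range MBit \<union> MEx ` U"
  define T where "T = {xs. set xs \<subseteq> Sig \<and> length xs \<le> L}"
  have sub: "set (AS n X) \<union> set (BS n X) \<subseteq> U" for X
    unfolding AS_def BS_def U_def by auto
  have img: "f ` Pow {..<n} \<subseteq> T \<times> UNIV"
  proof
    fix z assume "z \<in> f ` Pow {..<n}"
    then obtain X where z: "z = f X" by auto
    have "set (run P (AS n X) (BS n X) L) \<subseteq> Sig"
      using run_alpha[of P "AS n X" "BS n X" L] sub[of X] unfolding Sig_def by blast
    then show "z \<in> T \<times> UNIV" unfolding z f_def T_def using run_len by auto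
  qed
  have finU: "finite U" unfolding U_def by simp
  have cU: "card U \<le> n + 1"
  proof -
    have "card U \<le> Suc (card ((\<lambda>j. (ept n j, False)) ` {..<n}))"
      unfolding U_def by (rule card_insert_le_m1) auto
    also have "card ((\<lambda>j. (ept n j, False)) ` {..<n}) \<le> n"
      using card_image_le[of "{..<n}" "\<lambda>j. (ept n j, False)"] by simp
    finally show ?thesis by simp
  qed
  have finS: "finite Sig" unfolding Sig_def using finU by simp
  have cS: "card Sig \<le> n + 3"
  proof -
    have "card Sig \<le> card (range (MBit :: bool \<Rightarrow> nat msg)) + card (MEx ` U)"
      unfolding Sig_def by (rule card_Un_le)
    moreover have "card (range (MBit :: bool \<Rightarrow> nat msg)) \<le> 2"
      using card_image_le[of "UNIV :: bool set" MBit] by simp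
    moreover have "card (MEx ` U) \<le> n + 1" using card_image_le[OF finU, of MEx] cU by simp
    ultimately show ?thesis by simp
  qed
  have finT: "finite T" and cT: "card T \<le> (card Sig + 1) ^ L"
    using lists_le_card[OF finS, of L] unfolding T_def by auto
  have "(2::nat) ^ n = card (f ` Pow {..<n})"
    using card_image[OF inj] by (simp add: card_Pow)
  also have "\<dots> \<le> card (T \<times> (UNIV :: bool set))"
    by (rule card_mono) (use finT img in auto)
  also have "\<dots> = card T * 2" by (simp add: card_cartesian_product)
  also have "\<dots> \<le> (card Sig + 1) ^ L * 2" using cT by simp
  also have "\<dots> \<le> (n + 4) ^ L * 2" using cS by (simp add: power_mono)
  finally show False using small by simp
qed


lemma vc: "vc_dim_eq HH 1"
  unfolding vc_dim_eq_def
proof (intro conjI)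
  show "\<exists>A. finite A \<and> card A = 1 \<and> shatters HH A"
  proof (intro exI conjI)
    show "shatters HH {bpt 1}"
      unfolding shatters_def
    proof (intro allI impI)
      fix B assume "B \<subseteq> {bpt 1}"
      then have "B = {} \<or> B = {bpt 1}" by blast
      then show "\<exists>h\<in>HH. \<forall>x\<in>{bpt 1}. h x = (x \<in> B)"
      proof
        assume "B = {}"
        moreover have "hc 2 0 \<in> HH" unfolding HH_def by (rule CollectI, rule exI[of _ 2], rule exI[of _ 0]) simp
        ultimately show ?thesis by (intro bexI[of _ "hc 2 0"]) (auto simp: hc_def)
      next
        assume "B = {bpt 1}"
        moreover have "hc 1 0 \<in> HH" unfolding HH_def by (rule CollectI, rule exI[of _ 1], rule exI[of _ 0]) simp
        ultimately show ?thesis by (intro bexI[of _ "hc 1 0"]) (auto simp: hc_def)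
      qed
    qed
  qed auto
next
  show "\<forall>A. finite A \<and> shatters HH A \<longrightarrow> card A \<le> 1"
  proof (intro allI impI)
    fix A assume a: "finite A \<and> shatters HH A"
    have "\<forall>x\<in>A. \<forall>y\<in>A. x = y"
    proof (intro ballI, rule ccontr)
      fix x y assume xy: "x \<in> A" "y \<in> A" "x \<noteq> y"
      obtain h where h: "h \<in> HH" "\<forall>z\<in>A. h z = (z \<in> A)"
        using a unfolding shatters_def by blast
      obtain m i where hm: "h = hc m i" using h(1) unfolding HH_def by auto
      have "h x" "h y" using h xy by auto
      then have "\<exists>e b. e \<in> A \<and> b \<in> A \<and> e = ept m i \<and> b = bpt m"
        using xy hm unfolding hc_def by auto
      then obtain e b where eb: "e \<in> A" "b \<in> A" "e = ept m i" "b = bpt m" by blast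
      obtain h' where h': "h' \<in> HH" "\<forall>z\<in>A. h' z = (z \<in> {e})"
        using a eb(1) unfolding shatters_def by (metis empty_subsetI insert_subset)
      obtain m' i' where hm': "h' = hc m' i'" using h'(1) unfolding HH_def by auto
      have "h' e" "\<not> h' b" using h' eb by auto
      then show False using eb hm' unfolding hc_def by auto
    qed
    then show "card A \<le> 1" using card_le_Suc0_iff_eq a by auto
  qed
qed

lemma ln2_half: "1/2 \<le> ln (2::real)"
proof -
  have "ln (1/2::real) \<le> 1/2 - 1" by (rule ln_le_minus_one) simp
  then show ?thesis by (simp add: ln_div)
qed

lemma arith:
  fixes eps :: real
  assumes e: "0 < eps" "eps < 1/4096"
  defines "n \<equiv> nat \<lfloor>1/(4*eps)\<rfloor>"
    and "L \<equiv> nat \<lceil>(1/16) / (eps * ln (1/eps))\<rceil>"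
  shows "eps * real (2*n+1) < 1" "2*(n+4)^L < (2::nat)^n"
    "(1/16) / (eps * ln (1/eps)) \<le> real L"
proof -
  define y where "y = 1/eps"
  have y: "y > 4096" using e unfolding y_def by (simp add: field_simps)
  have epsy: "eps = 1/y" unfolding y_def using e by simp
  have n1: "real n \<le> y/4" "y/4 - 1 < real n"
  proof -
    have h4: "1/(4*eps) = y/4" unfolding y_def by simp
    have nn: "n = nat \<lfloor>y/4\<rfloor>" unfolding n_def h4 by (rule refl)
    have "0 \<le> \<lfloor>y/4\<rfloor>" using y by simp
    then have "real n = of_int \<lfloor>y/4\<rfloor>" unfolding nn by simp
    then show "real n \<le> y/4" "y/4 - 1 < real n" by linarith+
  qed
  show "eps * real (2*n+1) < 1"
  proof -
    have "real (2*n+1) \<le> y/2 + 1" using n1 by simp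
    then have "eps * real (2*n+1) \<le> eps * (y/2+1)" using e by (simp add: mult_left_mono)
    also have "\<dots> = 1/2 + eps" unfolding epsy using y by (simp add: field_simps)
    finally show ?thesis using e by simp
  qed
  have lny: "0 < ln y" using y by simp
  define B where "B = (1/16) / (eps * ln (1/eps))"
  have B: "B = y / (16 * ln y)" unfolding B_def y_def[symmetric] epsy using y by (simp add: field_simps)
  have B0: "0 \<le> B" unfolding B using lny y by simp
  have LB: "B \<le> real L" "real L \<le> B + 1"
  proof -
    have "real L = of_int \<lceil>B\<rceil>" unfolding L_def B_def[symmetric] using B0 by simp
    then show "B \<le> real L" "real L \<le> B + 1" by linarith+
  qed
  then show "(1/16) / (eps * ln (1/eps)) \<le> real L" unfolding B_def by simp
  have n4: "0 < real n + 4" "real n + 4 \<le> y" using n1 y by auto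
  have ln4: "0 \<le> ln (real n + 4)" "ln (real n + 4) \<le> ln y" using n4 by auto
  have "real L * ln (real n + 4) \<le> (B + 1) * ln y"
    using LB ln4 by (meson mult_mono' of_nat_0_le_iff order_trans)
  also have "\<dots> = y/16 + ln y" unfolding B using lny by (simp add: field_simps)
  finally have s1: "real L * ln (real n + 4) \<le> y/16 + ln y" .
  define s where "s = sqrt y"
  have s: "s \<ge> 64" "y = s * s" unfolding s_def using y
    by (auto simp: real_le_rsqrt)
  have "ln y = 2 * ln s" unfolding s_def using y by (simp add: ln_sqrt)
  also have "\<dots> \<le> 2 * (s - 1)" using ln_le_minus_one[of s] s by simp
  finally have lns: "ln y \<le> 2*s - 2" by simp
  have "2*s \<le> s*s/32" using s(1) by (simp add: field_simps)
  then have s2: "ln y + 3/2 \<le> y/16" using lns s by linarith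
  have "real n * ln 2 \<ge> (y/4 - 1) * ln 2" using n1 by (simp add: mult_right_mono less_imp_le)
  moreover have "(y/4 - 1) * ln 2 \<ge> (y/4 - 1) * (1/2)"
    using ln2_half y by (intro mult_left_mono) auto
  ultimately have s3: "real n * ln 2 \<ge> y/8 - 1/2" by (simp add: algebra_simps)
  have lt: "ln 2 + real L * ln (real n + 4) < real n * ln 2"
    using s1 s2 s3 ln_2_less_1 by linarith
  have "real (2*(n+4)^L) = exp (ln 2 + real L * ln (real n + 4))"
    using n4 by (simp add: exp_add ln_realpow[symmetric])
  also have "\<dots> < exp (real n * ln 2)" using lt by simp
  also have "\<dots> = real ((2::nat)^n)" by (simp add: exp_of_nat_mult)
  finally show "2*(n+4)^L < (2::nat)^n" by (simp only: of_nat_less_iff)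
qed

theorem theorem2:
  "\<exists>H :: nat hyp set. vc_dim_eq H 1 \<and>
     (\<exists>c > 0. \<exists>k :: nat. \<exists>eps0 > 0. \<forall>eps. 0 < eps \<and> eps < eps0 \<longrightarrow>
        (\<forall>P :: nat protocol. learns_properly_on (realizable H) H eps P \<longrightarrow>
           (\<exists>Sa Sb tr. realizable H (Sa @ Sb) \<and> halts_with P Sa Sb tr \<and>
               real (length tr) \<ge> c / (eps * (ln (1 / eps)) ^ k))))"
proof -
  have main: "\<forall>eps. 0 < eps \<and> eps < 1/4096 \<longrightarrow>
        (\<forall>P :: nat protocol. learns_properly_on (realizable HH) HH eps P \<longrightarrow>
           (\<exists>Sa Sb tr. realizable HH (Sa @ Sb) \<and> halts_with P Sa Sb tr \<and>
               real (length tr) \<ge> (1/16) / (eps * (ln (1 / eps)) ^ 1)))"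
  proof (intro allI impI)
    fix eps :: real and P :: "nat protocol"
    assume e: "0 < eps \<and> eps < 1/4096" and learn: "learns_properly_on (realizable HH) HH eps P"
    define n where "n = nat \<lfloor>1/(4*eps)\<rfloor>"
    define L where "L = nat \<lceil>(1/16) / (eps * ln (1/eps))\<rceil>"
    have a1: "eps * real (2*n+1) < 1" and a2: "2*(n+4)^L < (2::nat)^n"
      and a3: "(1/16) / (eps * ln (1/eps)) \<le> real L"
      using arith[of eps] e unfolding n_def L_def by auto
    obtain Sa Sb tr where r: "realizable HH (Sa @ Sb)" "halts_with P Sa Sb tr" "L \<le> length tr"
      using core[OF learn _ a1 a2] e by auto
    show "\<exists>Sa Sb tr. realizable HH (Sa @ Sb) \<and> halts_with P Sa Sb tr \<and>
            real (length tr) \<ge> (1/16) / (eps * (ln (1 / eps)) ^ 1)"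
      using r a3 by (intro exI[of _ Sa] exI[of _ Sb] exI[of _ tr]) auto
  qed
  have c: "(1/16::real) > 0" "(1/4096::real) > 0" by simp_all
  show ?thesis
    apply (rule exI[of _ HH])
    apply (rule conjI[OF vc])
    apply (rule exI[of _ "1/16"])
    apply (rule conjI[OF c(1)])
    apply (rule exI[of _ 1])
    apply (rule exI[of _ "1/4096"])
    apply (rule conjI[OF c(2)])
    apply (rule main)
    done
qed

end
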